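(* Let $p\ge1$, let $y_1,y_2\in\mathbb{R}^p$ with $d=\|y_1-y_2\|_2$ and $\bar y=\frac12(y_1+y_2)$. Let $\delta>0$ and $\lambda>0$, and let $\rho$ be the minimax concave penalty $$\rho(t)=\Bigl(t-\frac{t^2}{2\lambda\delta}\Bigr)I(t<\lambda\delta)+\frac{\lambda\delta}{2}I(t\ge\lambda\delta),\qquad t\ge 0.$$ If $\lambda\ge(1+\frac1\delta)\,d$, then the global minimizer over $(\theta_1,\theta_2)\in\mathbb{R}^p\times\mathbb{R}^p$ of $$\ell(\theta_1,\theta_2)=\|y_1-\theta_1\|_2^2+\|y_2-\theta_2\|_2^2+\lambda\rho(\|\theta_1-\theta_2\|_2)$$ is $(\hat\theta_1,\hat\theta_2)=(\bar y,\bar y)$.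
   Context: $I(\cdot)$ denotes the indicator function. *)

theory Defs
  imports "HOL-Analysis.Analysis"
begin

definition mcp :: "real \<Rightarrow> real \<Rightarrow> real \<Rightarrow> real" where
  "mcp del lam t =
     (if t < lam * del then t - t\<^sup>2 / (2 * lam * del) else 0)
     + (if t \<ge> lam * del then lam * del / 2 else 0)"

definition mcp_loss :: "real \<Rightarrow> real \<Rightarrow> real^'p \<Rightarrow> real^'p \<Rightarrow> real^'p \<Rightarrow> real^'p \<Rightarrow> real" where
  "mcp_loss del lam y1 y2 \<theta>1 \<theta>2 =
     (norm (y1 - \<theta>1))\<^sup>2 + (norm (y2 - \<theta>2))\<^sup>2 + lam * mcp del lam (norm (\<theta>1 - \<theta>2))"

end

theory Submission
  imports Defs
begin

lemma decomp:
  fixes y1 y2 t1 t2 :: "'a::real_inner"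
  shows "(norm (y1 - t1))\<^sup>2 + (norm (y2 - t2))\<^sup>2 =
    2 * (norm ((1/2) *\<^sub>R (y1 + y2) - (1/2) *\<^sub>R (t1 + t2)))\<^sup>2 + (1/2) * (norm ((y1 - y2) - (t1 - t2)))\<^sup>2"
  unfolding power2_norm_eq_inner
  by (simp add: inner_simps inner_commute algebra_simps)

lemma scal:
  fixes del lam d t :: real
  assumes dp: "del > 0" and lp: "lam > 0" and d0: "d \<ge> 0" and h: "lam \<ge> (1 + 1/del) * d" and t0: "t > 0"
  shows "t\<^sup>2/2 - d*t + lam * mcp del lam t > 0"
proof (cases "t < lam * del")
  case True
  have hd: "lam * del \<ge> (del + 1) * d" using h dp by (simp add: field_simps)
  have m: "lam * mcp del lam t = lam * t - t\<^sup>2 / (2*del)"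
    using True dp lp by (simp add: mcp_def field_simps power2_eq_square)
  have inner: "t * del - t + 2 * lam * del - 2 * d * del > 0"
  proof (cases "del \<ge> 1")
    case True
    have "lam > d" proof (cases "d = 0")
      case False then have "d/del > 0" using d0 dp by simp
      then show ?thesis using h by (simp add: algebra_simps)
    qed (use lp in simp)
    then have "lam * del > d * del" using dp by simp
    moreover have "t*del - t \<ge> 0" using True t0 by (simp add: mult_left_mono[of 1 del t, simplified] algebra_simps)
    ultimately show ?thesis by linarith
  next
    case False
    have "(t - lam*del) * (del - 1) > 0" using False \<open>t < lam*del\<close> by (intro mult_neg_neg) auto
    then have a: "t * del - t > lam*del*del - lam*del" by (simp add: algebra_simps)
    have "lam*del*(del+1) \<ge> (del+1)*(del+1)*d" using hd dp by (simp add: mult_right_mono)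
    moreover have "(del+1)*(del+1)*d \<ge> 2*del*d"
      using d0 by (intro mult_right_mono) (auto simp: algebra_simps sum_squares_ge_zero)
    ultimately have "del * (lam*(del+1)) \<ge> del * (2*d)" by (simp add: algebra_simps)
    then have "lam*(del+1) \<ge> 2*d" using dp by simp
    then have "del * (lam*(del+1) - 2*d) \<ge> 0" using dp by simp
    then show ?thesis using a by (simp add: algebra_simps)
  qed
  have "t\<^sup>2/2 - d*t + lam * mcp del lam t = t * (t * del - t + 2 * lam * del - 2 * d * del) / (2*del)"
    using m dp by (simp add: field_simps power2_eq_square)
  also have "\<dots> > 0" using inner t0 dp by simp
  finally show ?thesis .
next
  case False
  have m: "lam * mcp del lam t = lam*lam*del/2" using False by (simp add: mcp_def)
  have "lam * del \<ge> (del + 1) * d" using h dp by (simp add: field_simps)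
  have "lam*lam*del > d*d"
  proof (cases "d = 0")
    case True then show ?thesis using lp dp by simp
  next
    case False
    have A: "lam*del*lam \<ge> (del+1)*d*lam" using \<open>lam * del \<ge> (del + 1) * d\<close> lp by (simp add: mult_right_mono)
    have "d/del > 0" using d0 dp False by simp
    then have X: "lam > d" using h by (simp add: algebra_simps)
    have Y: "d < (del+1)*d" using d0 False dp by simp
    have B: "(del+1)*d*lam > d*d" using mult_strict_mono[OF Y X] d0 dp Y by linarith
    from A B show ?thesis by (simp add: algebra_simps)
  qed
  moreover have "(t - d)\<^sup>2 \<ge> 0" by simp
  ultimately have "t\<^sup>2/2 - d*t + lam*lam*del/2 > 0" by (simp add: power2_eq_square algebra_simps)
  then show ?thesis unfolding m .
qed

lemma lowbound:
  fixes y1 y2 t1 t2 :: "real^'p" and del lam :: real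
  assumes dp: "del > 0" and lp: "lam > 0" and h: "lam \<ge> (1 + 1 / del) * dist y1 y2"
  shows "mcp_loss del lam y1 y2 t1 t2 \<ge> 2 * (norm ((1/2) *\<^sub>R (y1 + y2) - (1/2) *\<^sub>R (t1 + t2)))\<^sup>2 + (dist y1 y2)\<^sup>2/2"
    and "t1 \<noteq> t2 \<Longrightarrow> mcp_loss del lam y1 y2 t1 t2 > (dist y1 y2)\<^sup>2/2"
proof -
  define N where "N = norm ((1/2) *\<^sub>R (y1 + y2) - (1/2) *\<^sub>R (t1 + t2))"
  define d where "d = dist y1 y2"
  define t where "t = norm (t1 - t2)"
  have L: "mcp_loss del lam y1 y2 t1 t2 = 2 * N\<^sup>2 + (1/2) * (norm ((y1 - y2) - (t1 - t2)))\<^sup>2 + lam * mcp del lam t"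
    unfolding mcp_loss_def N_def t_def using decomp[of y1 t1 y2 t2] by simp
  have tri: "\<bar>d - t\<bar> \<le> norm ((y1 - y2) - (t1 - t2))"
    unfolding d_def t_def dist_norm by (rule norm_triangle_ineq3)
  then have sq: "(d - t)\<^sup>2 \<le> (norm ((y1 - y2) - (t1 - t2)))\<^sup>2"
    by (metis abs_ge_zero power2_abs power_mono)
  have d0: "d \<ge> 0" unfolding d_def by simp
  have hh: "lam \<ge> (1 + 1/del) * d" using h unfolding d_def .
  have "mcp_loss del lam y1 y2 t1 t2 \<ge> 2 * N\<^sup>2 + d\<^sup>2/2"
  proof (cases "t1 = t2")
    case True
    then have "t = 0" unfolding t_def by simp
    then have "mcp del lam t = 0" using mult_pos_pos[OF lp dp] by (simp add: mcp_def)
    then show ?thesis using L True unfolding d_def dist_norm by simp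
  next
    case False
    then have "t > 0" unfolding t_def by simp
    from scal[OF dp lp d0 hh this] have "t\<^sup>2/2 - d*t + lam * mcp del lam t > 0" .
    then have "(1/2)*(d-t)\<^sup>2 + lam * mcp del lam t > d\<^sup>2/2" by (simp add: power2_eq_square algebra_simps)
    then show ?thesis using L sq by simp
  qed
  then show "mcp_loss del lam y1 y2 t1 t2 \<ge> 2 * (norm ((1/2) *\<^sub>R (y1 + y2) - (1/2) *\<^sub>R (t1 + t2)))\<^sup>2 + (dist y1 y2)\<^sup>2/2"
    unfolding N_def d_def .
  assume ne: "t1 \<noteq> t2"
  then have "t > 0" unfolding t_def by simp
  from scal[OF dp lp d0 hh this] have "t\<^sup>2/2 - d*t + lam * mcp del lam t > 0" .
  then have "(1/2)*(d-t)\<^sup>2 + lam * mcp del lam t > d\<^sup>2/2" by (simp add: power2_eq_square algebra_simps)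
  moreover have "N\<^sup>2 \<ge> 0" by simp
  ultimately show "mcp_loss del lam y1 y2 t1 t2 > (dist y1 y2)\<^sup>2/2" using L sq unfolding d_def by linarith
qed

lemma half_double: "(1/2) *\<^sub>R (m + m) = (m::real^'p)"
  by (metis scaleR_2 scaleR_one scaleR_scaleR divide_inverse_commute divide_self_if zero_neq_numeral mult.commute)

lemma atmid:
  fixes y1 y2 :: "real^'p"
  assumes "del > 0" "lam > 0"
  shows "mcp_loss del lam y1 y2 ((1/2) *\<^sub>R (y1 + y2)) ((1/2) *\<^sub>R (y1 + y2)) = (dist y1 y2)\<^sup>2/2"
proof -
  have "mcp del lam 0 = 0" using mult_pos_pos[OF assms(2,1)] by (simp add: mcp_def)
  then show ?thesis
    unfolding mcp_loss_def using decomp[of y1 "(1/2) *\<^sub>R (y1 + y2)" y2 "(1/2) *\<^sub>R (y1 + y2)", unfolded half_double]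
    by (simp add: dist_norm)
qed

theorem lemma2:
  fixes y1 y2 :: "real^'p" and del lam :: real
  assumes "del > 0" and "lam > 0"
    and "lam \<ge> (1 + 1 / del) * dist y1 y2"
  shows "{(\<theta>1, \<theta>2). \<forall>\<eta>1 \<eta>2. mcp_loss del lam y1 y2 \<theta>1 \<theta>2 \<le> mcp_loss del lam y1 y2 \<eta>1 \<eta>2}
         = {((1/2) *\<^sub>R (y1 + y2), (1/2) *\<^sub>R (y1 + y2))}"
proof (rule set_eqI, safe)
  fix a b :: "real^'p"
  assume H: "\<forall>\<eta>1 \<eta>2. mcp_loss del lam y1 y2 a b \<le> mcp_loss del lam y1 y2 \<eta>1 \<eta>2"
  let ?m = "(1/2) *\<^sub>R (y1 + y2)"
  have le: "mcp_loss del lam y1 y2 a b \<le> (dist y1 y2)\<^sup>2/2" using H atmid[OF assms(1,2)] by metis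
  have ab: "a = b"
  proof (rule ccontr)
    assume "a \<noteq> b"
    from lowbound(2)[OF assms this] le show False by simp
  qed
  have "2 * (norm (?m - (1/2) *\<^sub>R (a + b)))\<^sup>2 \<le> 0" using lowbound(1)[OF assms, of a b] le by linarith
  then have "norm (?m - (1/2) *\<^sub>R (a + b)) = 0" by simp
  then have "?m = (1/2) *\<^sub>R (a + b)" by simp
  also have "\<dots> = a" using ab by (simp add: half_double)
  finally show "a = ?m" "b = ?m" using ab by auto
next
  fix e1 e2 :: "real^'p"
  show "mcp_loss del lam y1 y2 ((1/2) *\<^sub>R (y1 + y2)) ((1/2) *\<^sub>R (y1 + y2)) \<le> mcp_loss del lam y1 y2 e1 e2"
    using atmid[OF assms(1,2), of y1 y2] lowbound(1)[OF assms, of e1 e2]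
      zero_le_power2[of "norm ((1/2) *\<^sub>R (y1 + y2) - (1/2) *\<^sub>R (e1 + e2))"] by linarith
qed

end
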